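(* Fix a round $t$ and a bid $b\in[0,1]$. Let $m_t$ have CDF $G$ and be independent of the outcomes $(v_{t,1},v_{t,0})\in[0,1]^2$, where $\mathbb{E}[v_{t,1}-v_{t,0}]=\theta_*^\top x_t$. Let $\widehat G_t$ be a function with $\widehat G_t(b)\in(0,1)$, fixed (i.e. not random, or independent of $(m_t,v_{t,1},v_{t,0})$), satisfying $|\widehat G_t(b)-G(b)|\le u_t(b)$. Define \[ \widetilde e_t(b)=\frac{\mathbb{1}[b\ge m_t]\,v_{t,1}}{\widehat G_t(b)}-\frac{\mathbb{1}[b<m_t]\,v_{t,0}}{1-\widehat G_t(b)},\qquad \sigma_t(b)=\frac{1}{\widehat G_t(b)\,(1-\widehat G_t(b))}. \] Then with $c_0=4$, \[ \left|\mathbb{E}[\widetilde e_t(b)]-\theta_*^\top x_t\right|\le c_0\,u_t(b)\,\sigma_t(b)\quad\text{and}\quad \mathrm{Var}(\widetilde e_t(b))\le c_0\,\sigma_t(b)^2. \]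
   Context: Context: second-price auction round with context $x_t\in\mathbb{R}^d$, bid $b$, highest other bid $m_t$ with CDF $G$ (win iff $b\ge m_t$), winning outcome $v_{t,1}$ and baseline outcome $v_{t,0}$; $\theta_*\in\mathbb{R}^d$ is the linear treatment-effect parameter. $\widetilde e_t(b)$ is an inverse-propensity-weighted estimator of the treatment effect $v_{t,1}-v_{t,0}$ using an estimated propensity $\widehat G_t(b)$. *)

theory Defs
  imports "HOL-Probability.Probability"
begin

definition ipw_est :: "(real \<Rightarrow> real) \<Rightarrow> real \<Rightarrow> ('a \<Rightarrow> real) \<Rightarrow> ('a \<Rightarrow> real) \<Rightarrow> ('a \<Rightarrow> real) \<Rightarrow> 'a \<Rightarrow> real"
  where "ipw_est Ghat b m v1 v0 \<omega> =
     (if b \<ge> m \<omega> then 1 else 0) * v1 \<omega> / Ghat b - (if b < m \<omega> then 1 else 0) * v0 \<omega> / (1 - Ghat b)"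

definition sigma_t :: "(real \<Rightarrow> real) \<Rightarrow> real \<Rightarrow> real"
  where "sigma_t Ghat b = 1 / (Ghat b * (1 - Ghat b))"

end

theory Submission
  imports Defs
begin

lemma (in prob_space) indep_from_sets:
  fixes m :: "'a \<Rightarrow> real" and V :: "'a \<Rightarrow> real \<times> real" and f :: "real \<Rightarrow> real" and h :: "real \<times> real \<Rightarrow> real"
  assumes mm: "m \<in> borel_measurable M" and Vm: "V \<in> borel_measurable M"
  and fm: "f \<in> borel_measurable borel" and hm: "h \<in> borel_measurable borel"
  and ind: "\<And>(A :: real set) (B :: (real \<times> real) set). A \<in> sets borel \<Longrightarrow> B \<in> sets borel \<Longrightarrow>
         measure M {\<omega> \<in> space M. m \<omega> \<in> A \<and> V \<omega> \<in> B}
         = measure M {\<omega> \<in> space M. m \<omega> \<in> A} * measure M {\<omega> \<in> space M. V \<omega> \<in> B}"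
  shows "indep_var borel (\<lambda>\<omega>. f (m \<omega>)) borel (\<lambda>\<omega>. h (V \<omega>))"
proof -
  { fix S and X :: "'a \<Rightarrow> 'z"
    have "Int_stable {X -` A \<inter> space M |A. A \<in> sets S}"
    proof (safe intro!: Int_stableI)
      fix A B assume "A \<in> sets S" "B \<in> sets S"
      then show "\<exists>C. (X -` A \<inter> space M) \<inter> (X -` B \<inter> space M) = (X -` C \<inter> space M) \<and> C \<in> sets S"
        by (intro exI[of _ "A \<inter> B"]) auto
    qed }
  note Int_stable = this
  have fmm: "(\<lambda>\<omega>. f (m \<omega>)) \<in> borel_measurable M" using fm mm by measurable
  have hVm: "(\<lambda>\<omega>. h (V \<omega>)) \<in> borel_measurable M" using hm Vm by measurable
  show ?thesis unfolding indep_var_eq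
  proof (intro conjI indep_set_sigma_sets Int_stable fmm hVm)
    show "indep_set {(\<lambda>\<omega>. f (m \<omega>)) -` A \<inter> space M |A. A \<in> sets borel} {(\<lambda>\<omega>. h (V \<omega>)) -` A \<inter> space M |A. A \<in> sets borel}"
    proof (safe intro!: indep_setI)
      { fix A :: "real set" assume "A \<in> sets borel" then show "(\<lambda>\<omega>. f (m \<omega>)) -` A \<inter> space M \<in> sets M"
        using fmm by (auto intro: measurable_sets) }
      { fix A :: "real set" assume "A \<in> sets borel" then show "(\<lambda>\<omega>. h (V \<omega>)) -` A \<inter> space M \<in> sets M"
        using hVm by (auto intro: measurable_sets) }
    next
      fix A :: "real set" and B :: "real set" assume ab: "A \<in> sets borel" "B \<in> sets borel"
      have ab': "f -` A \<in> sets borel" "h -` B \<in> sets borel"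
        using ab fm hm by (auto dest: measurable_sets)
      have e1: "((\<lambda>\<omega>. f (m \<omega>)) -` A \<inter> space M) \<inter> ((\<lambda>\<omega>. h (V \<omega>)) -` B \<inter> space M) = {\<omega> \<in> space M. m \<omega> \<in> f -` A \<and> V \<omega> \<in> h -` B}" by auto
      have e2: "(\<lambda>\<omega>. f (m \<omega>)) -` A \<inter> space M = {\<omega> \<in> space M. m \<omega> \<in> f -` A}" by auto
      have e3: "(\<lambda>\<omega>. h (V \<omega>)) -` B \<inter> space M = {\<omega> \<in> space M. V \<omega> \<in> h -` B}" by auto
      show "prob (((\<lambda>\<omega>. f (m \<omega>)) -` A \<inter> space M) \<inter> ((\<lambda>\<omega>. h (V \<omega>)) -` B \<inter> space M)) =
        prob ((\<lambda>\<omega>. f (m \<omega>)) -` A \<inter> space M) * prob ((\<lambda>\<omega>. h (V \<omega>)) -` B \<inter> space M)"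
        by (subst e1, subst e2, subst e3, rule ind[OF ab'])
    qed
  qed
qed

theorem lemma2:
  fixes M :: "'a measure"
    and m v1 v0 :: "'a \<Rightarrow> real"
    and G Ghat u :: "real \<Rightarrow> real"
    and theta x :: "'d::euclidean_space"
    and b :: real
  assumes "prob_space M"
    and "b \<in> {0..1}"
    and "m \<in> borel_measurable M" and "v1 \<in> borel_measurable M" and "v0 \<in> borel_measurable M"
    and "\<And>y. G y = measure M {\<omega> \<in> space M. m \<omega> \<le> y}"
    and "\<And>(A :: real set) (B :: (real \<times> real) set). A \<in> sets borel \<Longrightarrow> B \<in> sets borel \<Longrightarrow>
         measure M {\<omega> \<in> space M. m \<omega> \<in> A \<and> (v1 \<omega>, v0 \<omega>) \<in> B}
         = measure M {\<omega> \<in> space M. m \<omega> \<in> A} * measure M {\<omega> \<in> space M. (v1 \<omega>, v0 \<omega>) \<in> B}"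
    and "AE \<omega> in M. v1 \<omega> \<in> {0..1} \<and> v0 \<omega> \<in> {0..1}"
    and "prob_space.expectation M (\<lambda>\<omega>. v1 \<omega> - v0 \<omega>) = theta \<bullet> x"
    and "Ghat b \<in> {0<..<1}"
    and "\<bar>Ghat b - G b\<bar> \<le> u b"
  shows "\<bar>prob_space.expectation M (ipw_est Ghat b m v1 v0) - theta \<bullet> x\<bar>
           \<le> 4 * u b * sigma_t Ghat b
       \<and> prob_space.variance M (ipw_est Ghat b m v1 v0) \<le> 4 * (sigma_t Ghat b)\<^sup>2"
proof -
  interpret P: prob_space M by fact
  define g where "g = Ghat b"
  define I where "I = (\<lambda>\<omega>. indicator {..b} (m \<omega>) :: real)"
  define J where "J = (\<lambda>\<omega>. indicator {b<..} (m \<omega>) :: real)"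
  define p where "p = G b"
  have g: "0 < g" "g < 1" using assms(10) by (auto simp: g_def)
  have mm: "m \<in> borel_measurable M" and v1m: "v1 \<in> borel_measurable M" and v0m: "v0 \<in> borel_measurable M"
    using assms(3-5) by auto
  have Im: "I \<in> borel_measurable M" unfolding I_def using mm by measurable
  have Jm: "J \<in> borel_measurable M" unfolding J_def using mm by measurable
  have AEv: "AE \<omega> in M. v1 \<omega> \<in> {0..1} \<and> v0 \<omega> \<in> {0..1}" by fact
  have iv1: "integrable M v1"
    by (rule P.integrable_const_bound[where B=1]) (use AEv v1m in auto)
  have iv0: "integrable M v0"
    by (rule P.integrable_const_bound[where B=1]) (use AEv v0m in auto)
  have iI: "integrable M I"
    by (rule P.integrable_const_bound[where B=1]) (use Im in \<open>auto simp: I_def indicator_def\<close>)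
  have iJ: "integrable M J"
    by (rule P.integrable_const_bound[where B=1]) (use Jm in \<open>auto simp: J_def indicator_def\<close>)
  have Vm: "(\<lambda>\<omega>. (v1 \<omega>, v0 \<omega>)) \<in> borel_measurable M" using v1m v0m by measurable
  have ind1': "P.indep_var borel (\<lambda>\<omega>. indicator {..b} (m \<omega>) :: real) borel (\<lambda>\<omega>. fst (v1 \<omega>, v0 \<omega>))"
    proof (rule P.indep_from_sets[OF mm Vm borel_measurable_indicator borel_measurable_continuous_onI assms(7)])
      show "{..b} \<in> sets borel" by simp
      show "continuous_on UNIV (fst :: real \<times> real \<Rightarrow> real)" by (intro continuous_intros)
    qed
  have ind1: "P.indep_var borel I borel v1"
    using ind1' unfolding I_def fst_conv .
  have ind0': "P.indep_var borel (\<lambda>\<omega>. indicator {b<..} (m \<omega>) :: real) borel (\<lambda>\<omega>. snd (v1 \<omega>, v0 \<omega>))"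
    proof (rule P.indep_from_sets[OF mm Vm borel_measurable_indicator borel_measurable_continuous_onI assms(7)])
      show "{b<..} \<in> sets borel" by simp
      show "continuous_on UNIV (snd :: real \<times> real \<Rightarrow> real)" by (intro continuous_intros)
    qed
  have ind0: "P.indep_var borel J borel v0"
    using ind0' unfolding J_def snd_conv .
  have EIv1: "P.expectation (\<lambda>\<omega>. I \<omega> * v1 \<omega>) = P.expectation I * P.expectation v1"
    by (rule P.indep_var_lebesgue_integral[OF ind1 iI iv1])
  have EJv0: "P.expectation (\<lambda>\<omega>. J \<omega> * v0 \<omega>) = P.expectation J * P.expectation v0"
    by (rule P.indep_var_lebesgue_integral[OF ind0 iJ iv0])
  have EI: "P.expectation I = p"
  proof -
    have "P.expectation I = P.expectation (indicator {\<omega>\<in>space M. m \<omega> \<le> b})"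
      by (rule Bochner_Integration.integral_cong) (auto simp: I_def indicator_def)
    also have "\<dots> = measure M {\<omega>\<in>space M. m \<omega> \<le> b}"
    proof -
      have "{\<omega>\<in>space M. m \<omega> \<le> b} \<inter> space M = {\<omega>\<in>space M. m \<omega> \<le> b}" by auto
      then show ?thesis using Bochner_Integration.integral_indicator[where M=M and A="{\<omega>\<in>space M. m \<omega> \<le> b}"] by simp
    qed
    finally show ?thesis using assms(6) by (simp add: p_def)
  qed
  have EJ: "P.expectation J = 1 - p"
  proof -
    have "P.expectation J = P.expectation (\<lambda>\<omega>. 1 - I \<omega>)"
      by (rule Bochner_Integration.integral_cong) (auto simp: I_def J_def indicator_def)
    also have "\<dots> = 1 - P.expectation I"
      using iI by (simp add: Bochner_Integration.integral_diff P.prob_space)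
    finally show ?thesis using EI by simp
  qed
  have eeq: "ipw_est Ghat b m v1 v0 = (\<lambda>\<omega>. I \<omega> * v1 \<omega> / g - J \<omega> * v0 \<omega> / (1 - g))"
    by (auto simp: ipw_est_def I_def J_def g_def indicator_def fun_eq_iff)
  define a1 where "a1 = P.expectation v1"
  define a0 where "a0 = P.expectation v0"
  have a1: "0 \<le> a1" "a1 \<le> 1" unfolding a1_def
    using P.integral_ge_const[of v1 0] P.integral_le_const[of v1 1] AEv iv1 by auto
  have a0: "0 \<le> a0" "a0 \<le> 1" unfolding a0_def
    using P.integral_ge_const[of v0 0] P.integral_le_const[of v0 1] AEv iv0 by auto
  have iIv1: "integrable M (\<lambda>\<omega>. I \<omega> * v1 \<omega>)" by (rule P.indep_var_integrable[OF ind1 iI iv1])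
  have iJv0: "integrable M (\<lambda>\<omega>. J \<omega> * v0 \<omega>)" by (rule P.indep_var_integrable[OF ind0 iJ iv0])
  have Ee: "P.expectation (ipw_est Ghat b m v1 v0) = p * a1 / g - (1 - p) * a0 / (1 - g)"
    unfolding eeq using iIv1 iJv0 EIv1 EJv0 EI EJ
    by (simp add: Bochner_Integration.integral_diff a1_def a0_def)
  have th: "theta \<bullet> x = a1 - a0"
    using assms(9) iv1 iv0 by (simp add: Bochner_Integration.integral_diff a1_def a0_def)
  have u: "\<bar>p - g\<bar> \<le> u b" using assms(11) by (simp add: p_def g_def)
  have sig: "sigma_t Ghat b = 1 / g + 1 / (1 - g)"
    using g by (simp add: sigma_t_def g_def[symmetric] field_simps)
  have diff: "p * a1 / g - (1 - p) * a0 / (1 - g) - (a1 - a0) = (p - g) * (a1 / g + a0 / (1 - g))"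
  proof -
    have 1: "p * a1 / g - a1 = (p - g) * (a1 / g)" using g by (simp add: field_simps)
    have 2: "(1 - p) * a0 / (1 - g) - a0 = - ((p - g) * (a0 / (1 - g)))" using g by (simp add: field_simps)
    show ?thesis using 1 2 by (simp add: algebra_simps)
  qed
  have b1: "a1 / g + a0 / (1 - g) \<le> 1 / g + 1 / (1 - g)"
    using g a1 a0 by (intro add_mono divide_right_mono) auto
  have b0: "0 \<le> a1 / g + a0 / (1 - g)" using g a1 a0 by auto
  have part1: "\<bar>P.expectation (ipw_est Ghat b m v1 v0) - theta \<bullet> x\<bar> \<le> 4 * u b * sigma_t Ghat b"
  proof -
    have "\<bar>P.expectation (ipw_est Ghat b m v1 v0) - theta \<bullet> x\<bar> = \<bar>p - g\<bar> * (a1 / g + a0 / (1 - g))"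
      unfolding Ee th diff abs_mult using b0 by simp
    also have "\<dots> \<le> u b * (1 / g + 1 / (1 - g))"
      using u b1 b0 by (intro mult_mono) auto
    also have "\<dots> \<le> 4 * u b * (1 / g + 1 / (1 - g))"
      using u g by (intro mult_right_mono) auto
    finally show ?thesis unfolding sig .
  qed
  define e where "e = ipw_est Ghat b m v1 v0"
  have em: "e \<in> borel_measurable M" unfolding e_def eeq using Im Jm v1m v0m by measurable
  have ebd: "AE \<omega> in M. - 1 / (1 - g) \<le> e \<omega> \<and> e \<omega> \<le> 1 / g"
    using AEv
  proof eventually_elim
    case (elim \<omega>)
    have d1: "v1 \<omega> / g \<le> 1 / g" "0 \<le> v1 \<omega> / g" using elim g by (auto intro: divide_right_mono)
    have d0: "v0 \<omega> / (1 - g) \<le> 1 / (1 - g)" "0 \<le> v0 \<omega> / (1 - g)" using elim g by (auto intro: divide_right_mono)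
    have pos: "0 \<le> 1 / g" "0 \<le> 1 / (1 - g)" using g by auto
    show ?case
    proof (cases "m \<omega> \<le> b")
      case True
      then have "e \<omega> = v1 \<omega> / g" unfolding e_def eeq I_def J_def indicator_def by simp
      then show ?thesis using d1 pos by linarith
    next
      case False
      then have "e \<omega> = - (v0 \<omega> / (1 - g))" unfolding e_def eeq I_def J_def indicator_def by simp
      then show ?thesis using d0 pos by linarith
    qed
  qed
  have pos: "0 < 1 / g" "0 < 1 / (1 - g)" using g by auto
  have ie: "integrable M e"
  proof (rule P.integrable_const_bound[where B="1 / g + 1 / (1 - g)"])
    show "AE \<omega> in M. norm (e \<omega>) \<le> 1 / g + 1 / (1 - g)"
      using ebd
    proof eventually_elim
      case (elim \<omega>)
      then show ?case using pos unfolding real_norm_def abs_le_iff by linarith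
    qed
  qed (rule em)
  have ae1: "AE \<omega> in M. - 1 / (1 - g) \<le> e \<omega>" using ebd by eventually_elim simp
  have ae2: "AE \<omega> in M. e \<omega> \<le> 1 / g" using ebd by eventually_elim simp
  have Eebd: "- 1 / (1 - g) \<le> P.expectation e" "P.expectation e \<le> 1 / g"
    using P.integral_ge_const[OF ie ae1] P.integral_le_const[OF ie ae2] by auto
  have sqbd: "AE \<omega> in M. (e \<omega> - P.expectation e)\<^sup>2 \<le> (1 / g + 1 / (1 - g))\<^sup>2"
    using ebd
  proof eventually_elim
    case (elim \<omega>)
    have "\<bar>e \<omega> - P.expectation e\<bar> \<le> 1 / g + 1 / (1 - g)" using elim Eebd by auto
    then show ?case by (metis abs_ge_zero power2_abs power_mono)
  qed
  have isq: "integrable M (\<lambda>\<omega>. (e \<omega> - P.expectation e)\<^sup>2)"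
    by (rule P.integrable_const_bound[where B="(1 / g + 1 / (1 - g))\<^sup>2"]) (use sqbd em in auto)
  have "P.variance e \<le> (1 / g + 1 / (1 - g))\<^sup>2"
    by (rule P.integral_le_const[OF isq sqbd])
  also have "\<dots> \<le> 4 * (1 / g + 1 / (1 - g))\<^sup>2" by simp
  finally have part2: "P.variance e \<le> 4 * (sigma_t Ghat b)\<^sup>2" unfolding sig .
  show ?thesis using part1 part2 unfolding e_def by simp
qed

end
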